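(* Let $X$ be a real Banach space, let $1<r\le p<\infty$, and let $n$ be the largest integer strictly less than $r$. Let $f:X\to\mathbb{R}$ be $p$-homogeneous, $C^n$ on $X\setminus\{0\}$, with $f^{(n)}$ $(r-n)$-Hölder on the unit sphere of $X$. Then $f$ is $C^n$ on all of $X$, $f^{(j)}(0)=0$ for $j=1,\dots,n$, and there are constants $C_1,\dots,C_n>0$ such that for all $x,y\in X$: (1) $\|f^{(n)}(x)-f^{(n)}(y)\|\le C_n(\max\{\|x\|,\|y\|\})^{p-r}\|x-y\|^{r-n}$; (2) $\|f^{(j)}(x)-f^{(j)}(y)\|\le C_j(\max\{\|x\|,\|y\|\})^{p-(j+1)}\|x-y\|$ for $j=1,\dots,n-1$.
   Context: A function $f$ is $p$-homogeneous if $f(\lambda x)=|\lambda|^pf(x)$ for all $x\in X$, $\lambda\in\mathbb{R}$. Derivatives are Fréchet derivatives, with the operator norm on multilinear maps. *)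

theory Defs
  imports "HOL-Analysis.Analysis"
begin

text \<open>A j-linear form on X is represented as a function on lists of vectors;
 only its values on lists of length j are relevant.  The first list entry is the
 most recently differentiated direction: D (j+1) x (h # vs) = (D(D j) x h) vs.\<close>

definition multilinear_form :: "nat \<Rightarrow> ('a::real_normed_vector list \<Rightarrow> real) \<Rightarrow> bool" where
  "multilinear_form j M \<longleftrightarrow>
     (\<forall>us vs. length us + length vs + 1 = j \<longrightarrow> linear (\<lambda>v. M (us @ v # vs)))"

definition bounded_form :: "nat \<Rightarrow> ('a::real_normed_vector list \<Rightarrow> real) \<Rightarrow> bool" where
  "bounded_form j M \<longleftrightarrow>
     (\<exists>K. \<forall>vs. length vs = j \<longrightarrow> \<bar>M vs\<bar> \<le> K * prod_list (map norm vs))"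

definition mnorm :: "nat \<Rightarrow> ('a::real_normed_vector list \<Rightarrow> real) \<Rightarrow> real" where
  "mnorm j M = (SUP vs \<in> {vs. length vs = j \<and> (\<forall>v\<in>set vs. norm v \<le> 1)}. \<bar>M vs\<bar>)"

definition higher_derivs ::
  "('a::real_normed_vector \<Rightarrow> real) \<Rightarrow> (nat \<Rightarrow> 'a \<Rightarrow> 'a list \<Rightarrow> real) \<Rightarrow> nat \<Rightarrow> 'a set \<Rightarrow> bool" where
  "higher_derivs f D n U \<longleftrightarrow>
     (\<forall>x\<in>U. D 0 x [] = f x) \<and>
     (\<forall>j\<le>n. \<forall>x\<in>U. multilinear_form j (D j x) \<and> bounded_form j (D j x)) \<and>
     (\<forall>j<n. \<forall>x\<in>U.
        ((\<lambda>y. mnorm j (\<lambda>vs. D j y vs - D j x vs - D (Suc j) x ((y - x) # vs)) / norm (y - x))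
          \<longlongrightarrow> 0) (at x)) \<and>
     (\<forall>x\<in>U. ((\<lambda>y. mnorm n (\<lambda>vs. D n y vs - D n x vs)) \<longlongrightarrow> 0) (at x within U))"

definition p_homogeneous :: "real \<Rightarrow> ('a::real_vector \<Rightarrow> real) \<Rightarrow> bool" where
  "p_homogeneous p f \<longleftrightarrow> (\<forall>x c::real. f (c *\<^sub>R x) = \<bar>c\<bar> powr p * f x)"

end

theory Submission
  imports Defs
begin


definition VV :: "nat \<Rightarrow> ('a::real_normed_vector) list set" where
  "VV j = {vs. length vs = j \<and> (\<forall>v\<in>set vs. norm v \<le> 1)}"

lemma mnorm_VV: "mnorm j M = (SUP vs \<in> VV j. \<bar>M vs\<bar>)"
  unfolding mnorm_def VV_def by simp

lemma VV_ne: "replicate j 0 \<in> VV j"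
  unfolding VV_def by auto

lemma VV_cons: "vs \<in> VV j \<Longrightarrow> norm h \<le> 1 \<Longrightarrow> h # vs \<in> VV (Suc j)"
  unfolding VV_def by auto

lemma prod_norm_le1: "(\<forall>v\<in>set vs. norm v \<le> 1) \<Longrightarrow> prod_list (map norm vs) \<le> (1::real)"
proof (induction vs)
  case Nil then show ?case by simp
next
  case (Cons a vs)
  then have "norm a \<le> 1" "prod_list (map norm vs) \<le> 1" by auto
  moreover have "0 \<le> prod_list (map norm vs)" by (induction vs) auto
  ultimately show ?case by (simp add: mult_le_one)
qed

lemma prod_norm_ge0: "0 \<le> prod_list (map norm (vs::'a::real_normed_vector list))"
  by (induction vs) auto

lemma bf_bdd:
  assumes "bounded_form j M"
  shows "bdd_above ((\<lambda>vs. \<bar>M vs\<bar>) ` VV j)"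
proof -
  obtain K where K: "\<And>vs. length vs = j \<Longrightarrow> \<bar>M vs\<bar> \<le> K * prod_list (map norm vs)"
    using assms unfolding bounded_form_def by blast
  have "\<bar>M vs\<bar> \<le> \<bar>K\<bar>" if "vs \<in> VV j" for vs
  proof -
    have "\<bar>M vs\<bar> \<le> K * prod_list (map norm vs)" using K that unfolding VV_def by auto
    also have "\<dots> \<le> \<bar>K\<bar> * prod_list (map norm vs)"
      using prod_norm_ge0[of vs] by (simp add: mult_right_mono)
    also have "\<dots> \<le> \<bar>K\<bar> * 1"
      using prod_norm_le1[of vs] that unfolding VV_def by (intro mult_left_mono) auto
    finally show ?thesis by simp
  qed
  then show ?thesis by (intro bdd_aboveI2) blast
qed

lemma mnorm_upper: "bounded_form j M \<Longrightarrow> vs \<in> VV j \<Longrightarrow> \<bar>M vs\<bar> \<le> mnorm j M"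
  unfolding mnorm_VV by (rule cSUP_upper) (auto intro: bf_bdd)

lemma mnorm_least: "(\<And>vs. vs \<in> VV j \<Longrightarrow> \<bar>M vs\<bar> \<le> B) \<Longrightarrow> mnorm j M \<le> B"
  unfolding mnorm_VV by (rule cSUP_least) (use VV_ne in auto)

lemma mnorm_nonneg: "bounded_form j M \<Longrightarrow> 0 \<le> mnorm j M"
  using mnorm_upper[OF _ VV_ne, of j M] by linarith

lemma mnorm_cong: "(\<And>vs. vs \<in> VV j \<Longrightarrow> M vs = M' vs) \<Longrightarrow> mnorm j M = mnorm j M'"
  unfolding mnorm_VV by (rule SUP_cong) auto

lemma mnorm_zero: "mnorm j (\<lambda>vs::'a::real_normed_vector list. 0) = 0"
proof -
  have b: "bounded_form j (\<lambda>vs::'a list. 0)"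
    by (auto simp: bounded_form_def intro: exI[of _ 0])
  show ?thesis
    using mnorm_least[of j "\<lambda>vs::'a list. 0" 0] mnorm_nonneg[OF b] by simp
qed

lemma mnorm_swap: "mnorm j (\<lambda>vs. A vs - B vs) = mnorm j (\<lambda>vs. B vs - A vs)"
  unfolding mnorm_VV by (rule SUP_cong) (auto simp: abs_minus_commute)

lemma bf_diff:
  assumes "bounded_form j A" "bounded_form j B"
  shows "bounded_form j (\<lambda>vs. A vs - B vs)"
proof -
  obtain K where K: "\<And>vs. length vs = j \<Longrightarrow> \<bar>A vs\<bar> \<le> K * prod_list (map norm vs)"
    using assms unfolding bounded_form_def by blast
  obtain L where L: "\<And>vs. length vs = j \<Longrightarrow> \<bar>B vs\<bar> \<le> L * prod_list (map norm vs)"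
    using assms unfolding bounded_form_def by blast
  show ?thesis unfolding bounded_form_def
  proof (intro exI allI impI)
    fix vs :: "'a list" assume "length vs = j"
    then have "\<bar>A vs\<bar> \<le> K * prod_list (map norm vs)" "\<bar>B vs\<bar> \<le> L * prod_list (map norm vs)"
      using K L by auto
    then show "\<bar>A vs - B vs\<bar> \<le> (K + L) * prod_list (map norm vs)"
      by (simp add: distrib_right)
  qed
qed

lemma bf_scale:
  assumes "bounded_form j A"
  shows "bounded_form j (\<lambda>vs. c * A vs)"
proof -
  obtain K where K: "\<And>vs. length vs = j \<Longrightarrow> \<bar>A vs\<bar> \<le> K * prod_list (map norm vs)"
    using assms unfolding bounded_form_def by blast
  show ?thesis unfolding bounded_form_def
  proof (intro exI allI impI)
    fix vs :: "'a list" assume "length vs = j"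
    then have "\<bar>c\<bar> * \<bar>A vs\<bar> \<le> \<bar>c\<bar> * (K * prod_list (map norm vs))"
      using K by (intro mult_left_mono) auto
    then show "\<bar>c * A vs\<bar> \<le> (\<bar>c\<bar> * K) * prod_list (map norm vs)"
      by (simp add: abs_mult mult.assoc)
  qed
qed

lemma bf_cons:
  assumes "bounded_form (Suc j) A"
  shows "bounded_form j (\<lambda>vs. A (h # vs))"
proof -
  obtain K where K: "\<And>vs. length vs = Suc j \<Longrightarrow> \<bar>A vs\<bar> \<le> K * prod_list (map norm vs)"
    using assms unfolding bounded_form_def by blast
  show ?thesis unfolding bounded_form_def
  proof (intro exI allI impI)
    fix vs :: "'a list" assume "length vs = j"
    then show "\<bar>A (h # vs)\<bar> \<le> (K * norm h) * prod_list (map norm vs)"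
      using K[of "h # vs"] by (simp add: mult.assoc)
  qed
qed

lemma mnorm_scale:
  assumes "bounded_form j A"
  shows "mnorm j (\<lambda>vs. c * A vs) = \<bar>c\<bar> * mnorm j A"
proof (rule antisym)
  show "mnorm j (\<lambda>vs. c * A vs) \<le> \<bar>c\<bar> * mnorm j A"
    by (rule mnorm_least) (auto simp: abs_mult intro: mult_left_mono mnorm_upper[OF assms])
  show "\<bar>c\<bar> * mnorm j A \<le> mnorm j (\<lambda>vs. c * A vs)"
  proof (cases "c = 0")
    case True
    then show ?thesis using mnorm_nonneg[OF bf_scale[OF assms, of 0]] by simp
  next
    case False
    have "mnorm j A \<le> mnorm j (\<lambda>vs. c * A vs) / \<bar>c\<bar>"
    proof (rule mnorm_least)
      fix vs :: "'a list" assume "vs \<in> VV j"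
      then have "\<bar>c * A vs\<bar> \<le> mnorm j (\<lambda>vs. c * A vs)"
        by (rule mnorm_upper[OF bf_scale[OF assms]])
      then show "\<bar>A vs\<bar> \<le> mnorm j (\<lambda>vs. c * A vs) / \<bar>c\<bar>"
        using False by (simp add: abs_mult field_simps)
    qed
    then show ?thesis using False by (simp add: field_simps)
  qed
qed

lemma ml_first_scale:
  assumes "multilinear_form (Suc j) A" "length vs = j"
  shows "A ((c *\<^sub>R h) # vs) = c * A (h # vs)"
proof -
  have "linear (\<lambda>v. A ([] @ v # vs))" using assms unfolding multilinear_form_def
    by (auto dest: spec[of _ "[]"])
  then show ?thesis using linear_cmul[of "\<lambda>v. A (v # vs)" c h] by simp
qed



lemma DL:
  fixes E :: "'a::real_normed_vector \<Rightarrow> 'a list \<Rightarrow> real" and A :: "'a list \<Rightarrow> real"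
  assumes lim: "((\<lambda>y. mnorm j (\<lambda>vs. E y vs - E z vs - A ((y - z) # vs)) / norm (y - z)) \<longlongrightarrow> 0) (at z)"
  and bnd: "\<forall>\<^sub>F y in at z. bounded_form j (\<lambda>vs. E y vs - E z vs - A ((y - z) # vs))"
  and lin: "\<And>c k. A ((c *\<^sub>R k) # vs) = c * A (k # vs)"
  and h: "h \<noteq> 0" and z: "z = a + s0 *\<^sub>R h" and vs: "vs \<in> VV j"
  shows "((\<lambda>s. E (a + s *\<^sub>R h) vs) has_real_derivative A (h # vs)) (at s0)"
proof -
  define R where "R y = (\<lambda>vs. E y vs - E z vs - A ((y - z) # vs))" for y
  define \<phi> where "\<phi> y = mnorm j (R y) / norm (y - z)" for y
  have flim: "filterlim (\<lambda>s. a + s *\<^sub>R h) (at z) (at s0)"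
    unfolding filterlim_at
  proof
    show "\<forall>\<^sub>F s in at s0. a + s *\<^sub>R h \<in> UNIV \<and> a + s *\<^sub>R h \<noteq> z"
      unfolding eventually_at_filter using h z by (auto intro!: always_eventually)
    have "((\<lambda>s. a + s *\<^sub>R h) \<longlongrightarrow> a + s0 *\<^sub>R h) (at s0)"
      by (intro tendsto_intros)
    then show "((\<lambda>s. a + s *\<^sub>R h) \<longlongrightarrow> z) (at s0)" using z by simp
  qed
  have L1: "((\<lambda>s. \<phi> (a + s *\<^sub>R h)) \<longlongrightarrow> 0) (at s0)"
    using filterlim_compose[OF lim flim] unfolding \<phi>_def R_def by simp
  have ev: "\<forall>\<^sub>F s in at s0. bounded_form j (R (a + s *\<^sub>R h))"
    using flim bnd unfolding filterlim_iff R_def by blast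
  have ev2: "\<forall>\<^sub>F s in at s0. s \<noteq> s0"
    by (simp add: eventually_at_filter)
  have "((\<lambda>s. (E (a + s *\<^sub>R h) vs - E (a + s0 *\<^sub>R h) vs) / (s - s0) - A (h # vs)) \<longlongrightarrow> 0) (at s0)"
  proof (rule tendsto_0_le[OF L1, of _ "norm h"])
    show "\<forall>\<^sub>F s in at s0. norm ((E (a + s *\<^sub>R h) vs - E (a + s0 *\<^sub>R h) vs) / (s - s0) - A (h # vs))
        \<le> norm (\<phi> (a + s *\<^sub>R h)) * norm h"
      using ev ev2
    proof eventually_elim
      case (elim s)
      define y where "y = a + s *\<^sub>R h"
      have yz: "y - z = (s - s0) *\<^sub>R h" unfolding y_def z by (simp add: algebra_simps)
      have ne: "s - s0 \<noteq> 0" using elim by simp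
      have eq: "(E (a + s *\<^sub>R h) vs - E (a + s0 *\<^sub>R h) vs) / (s - s0) - A (h # vs)
          = R y vs / (s - s0)"
        unfolding R_def yz lin using ne z y_def by (simp add: field_simps)
      have "\<bar>R y vs\<bar> \<le> mnorm j (R y)"
        using mnorm_upper[OF _ vs] elim y_def by simp
      moreover have "norm (y - z) = \<bar>s - s0\<bar> * norm h" unfolding yz by simp
      moreover have "0 \<le> mnorm j (R y)" using mnorm_nonneg elim y_def by simp
      ultimately have "\<bar>R y vs\<bar> / \<bar>s - s0\<bar> \<le> \<phi> y * norm h"
        unfolding \<phi>_def using h ne by (simp add: field_simps divide_right_mono)
      moreover have "0 \<le> \<phi> y" unfolding \<phi>_def using \<open>0 \<le> mnorm j (R y)\<close> by simp
      ultimately show ?case unfolding eq y_def by (simp add: abs_div)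
    qed
  qed
  then have "((\<lambda>s. (E (a + s *\<^sub>R h) vs - E (a + s0 *\<^sub>R h) vs) / (s - s0)) \<longlongrightarrow> A (h # vs)) (at s0)"
    by (rule LIM_zero_cancel)
  then show ?thesis unfolding has_field_derivative_iff by simp
qed



lemma ev_ne0: "(x::'a::real_normed_vector) \<noteq> 0 \<Longrightarrow> \<forall>\<^sub>F y in at x. y \<noteq> 0"
  using tendsto_imp_eventually_ne[OF tendsto_ident_at] by blast

lemma hd_unpack:
  assumes "higher_derivs f D n U"
  shows "\<And>x. x \<in> U \<Longrightarrow> D 0 x [] = f x"
    and "\<And>j x. j \<le> n \<Longrightarrow> x \<in> U \<Longrightarrow> multilinear_form j (D j x)"
    and "\<And>j x. j \<le> n \<Longrightarrow> x \<in> U \<Longrightarrow> bounded_form j (D j x)"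
    and "\<And>j x. j < n \<Longrightarrow> x \<in> U \<Longrightarrow>
        ((\<lambda>y. mnorm j (\<lambda>vs. D j y vs - D j x vs - D (Suc j) x ((y - x) # vs)) / norm (y - x))
          \<longlongrightarrow> 0) (at x)"
    and "\<And>x. x \<in> U \<Longrightarrow> ((\<lambda>y. mnorm n (\<lambda>vs. D n y vs - D n x vs)) \<longlongrightarrow> 0) (at x within U)"
  using assms unfolding higher_derivs_def by auto

lemma HOM:
  fixes f :: "'a::real_normed_vector \<Rightarrow> real"
  assumes hd: "higher_derivs f D n (- {0})" and ph: "p_homogeneous p f"
  shows "j \<le> n \<Longrightarrow> x \<noteq> 0 \<Longrightarrow> c > 0 \<Longrightarrow> vs \<in> VV j \<Longrightarrow>
           D j (c *\<^sub>R x) vs = c powr (p - real j) * D j x vs"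
proof (induction j arbitrary: x c vs)
  case 0
  then have "vs = []" unfolding VV_def by auto
  moreover have "c *\<^sub>R x \<noteq> 0" using 0 by simp
  ultimately show ?case using hd_unpack(1)[OF hd] 0 ph unfolding p_homogeneous_def by simp
next
  case (Suc j)
  note IH = Suc.IH
  have jn: "j < n" "j \<le> n" "Suc j \<le> n" using Suc by auto
  have x0: "x \<noteq> 0" and c0: "c > 0" using Suc by auto
  have cx0: "c *\<^sub>R x \<noteq> 0" using x0 c0 by simp
  obtain h ws where vs: "vs = h # ws" and ws: "ws \<in> VV j"
    using Suc.prems(4) unfolding VV_def by (cases vs) auto
  have lws: "length ws = j" using ws unfolding VV_def by auto
  have ml1: "multilinear_form (Suc j) (D (Suc j) x)" using hd_unpack(2)[OF hd jn(3)] x0 by simp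
  have ml2: "multilinear_form (Suc j) (D (Suc j) (c *\<^sub>R x))" using hd_unpack(2)[OF hd jn(3)] cx0 by simp
  show ?case
  proof (cases "h = 0")
    case True
    have "D (Suc j) x (h # ws) = 0" "D (Suc j) (c *\<^sub>R x) (h # ws) = 0"
      using ml_first_scale[OF ml1 lws, of 0 0] ml_first_scale[OF ml2 lws, of 0 0] True by simp_all
    then show ?thesis using vs by simp
  next
    case False
    define E where "E y = (\<lambda>vs. D j (c *\<^sub>R y) vs)" for y
    define A1 where "A1 = (\<lambda>us. c powr (p - real j) * D (Suc j) x us)"
    define A2 where "A2 = (\<lambda>us. c * D (Suc j) (c *\<^sub>R x) us)"
    have d1: "((\<lambda>s. E (x + s *\<^sub>R h) ws) has_real_derivative A1 (h # ws)) (at 0)"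
    proof (rule DL[where z = x and j = j])
      have orig: "((\<lambda>y. mnorm j (\<lambda>vs. D j y vs - D j x vs - D (Suc j) x ((y - x) # vs)) / norm (y - x))
          \<longlongrightarrow> 0) (at x)" using hd_unpack(4)[OF hd jn(1)] x0 by simp
      have "((\<lambda>y. c powr (p - real j) * (mnorm j (\<lambda>vs. D j y vs - D j x vs - D (Suc j) x ((y - x) # vs)) / norm (y - x)))
          \<longlongrightarrow> c powr (p - real j) * 0) (at x)" by (intro tendsto_intros orig)
      then have "((\<lambda>y. c powr (p - real j) * (mnorm j (\<lambda>vs. D j y vs - D j x vs - D (Suc j) x ((y - x) # vs)) / norm (y - x)))
          \<longlongrightarrow> 0) (at x)" by simp
      then show "((\<lambda>y. mnorm j (\<lambda>vs. E y vs - E x vs - A1 ((y - x) # vs)) / norm (y - x)) \<longlongrightarrow> 0) (at x)"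
      proof (rule Lim_transform_eventually)
        show "\<forall>\<^sub>F y in at x. c powr (p - real j) * (mnorm j (\<lambda>vs. D j y vs - D j x vs - D (Suc j) x ((y - x) # vs)) / norm (y - x))
          = mnorm j (\<lambda>vs. E y vs - E x vs - A1 ((y - x) # vs)) / norm (y - x)"
          using ev_ne0[OF x0]
        proof eventually_elim
          case (elim y)
          have b: "bounded_form j (\<lambda>vs. D j y vs - D j x vs - D (Suc j) x ((y - x) # vs))"
            by (intro bf_diff bf_cons) (use hd_unpack(3)[OF hd] jn elim x0 in auto)
          have "mnorm j (\<lambda>vs. E y vs - E x vs - A1 ((y - x) # vs))
              = mnorm j (\<lambda>vs. c powr (p - real j) * (D j y vs - D j x vs - D (Suc j) x ((y - x) # vs)))"
            by (rule mnorm_cong) (simp add: E_def A1_def IH jn elim x0 c0 algebra_simps)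
          also have "\<dots> = c powr (p - real j) * mnorm j (\<lambda>vs. D j y vs - D j x vs - D (Suc j) x ((y - x) # vs))"
            using mnorm_scale[OF b] by simp
          finally show ?case by simp
        qed
      qed
      show "\<forall>\<^sub>F y in at x. bounded_form j (\<lambda>vs. E y vs - E x vs - A1 ((y - x) # vs))"
        using ev_ne0[OF x0]
      proof eventually_elim
        case (elim y)
        then have "c *\<^sub>R y \<noteq> 0" using c0 by simp
        then show ?case unfolding E_def A1_def
          by (intro bf_diff bf_scale bf_cons) (use hd_unpack(3)[OF hd] jn cx0 x0 in auto)
      qed
      show "\<And>c' k. A1 ((c' *\<^sub>R k) # ws) = c' * A1 (k # ws)"
        unfolding A1_def using ml_first_scale[OF ml1 lws] by simp
    qed (use False ws in auto)
    have d2: "((\<lambda>s. E (x + s *\<^sub>R h) ws) has_real_derivative A2 (h # ws)) (at 0)"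
    proof (rule DL[where z = x and j = j])
      define \<psi> where "\<psi> w = mnorm j (\<lambda>vs. D j w vs - D j (c *\<^sub>R x) vs - D (Suc j) (c *\<^sub>R x) ((w - c *\<^sub>R x) # vs))
          / norm (w - c *\<^sub>R x)" for w
      have orig: "(\<psi> \<longlongrightarrow> 0) (at (c *\<^sub>R x))" unfolding \<psi>_def
        using hd_unpack(4)[OF hd jn(1)] cx0 by simp
      have flim: "filterlim (\<lambda>y. c *\<^sub>R y) (at (c *\<^sub>R x)) (at x)"
        unfolding filterlim_at
      proof
        show "\<forall>\<^sub>F y in at x. c *\<^sub>R y \<in> UNIV \<and> c *\<^sub>R y \<noteq> c *\<^sub>R x"
          unfolding eventually_at_filter using c0 by (auto intro!: always_eventually)
        show "((\<lambda>y. c *\<^sub>R y) \<longlongrightarrow> c *\<^sub>R x) (at x)" by (intro tendsto_intros)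
      qed
      have "((\<lambda>y. c * \<psi> (c *\<^sub>R y)) \<longlongrightarrow> c * 0) (at x)"
        by (intro tendsto_intros filterlim_compose[OF orig flim])
      then have "((\<lambda>y. c * \<psi> (c *\<^sub>R y)) \<longlongrightarrow> 0) (at x)" by simp
      then show "((\<lambda>y. mnorm j (\<lambda>vs. E y vs - E x vs - A2 ((y - x) # vs)) / norm (y - x)) \<longlongrightarrow> 0) (at x)"
      proof (rule Lim_transform_eventually)
        show "\<forall>\<^sub>F y in at x. c * \<psi> (c *\<^sub>R y) = mnorm j (\<lambda>vs. E y vs - E x vs - A2 ((y - x) # vs)) / norm (y - x)"
        proof (intro always_eventually allI)
          fix y
          have "mnorm j (\<lambda>vs. E y vs - E x vs - A2 ((y - x) # vs))
             = mnorm j (\<lambda>vs. D j (c *\<^sub>R y) vs - D j (c *\<^sub>R x) vs - D (Suc j) (c *\<^sub>R x) ((c *\<^sub>R y - c *\<^sub>R x) # vs))"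
          proof (rule mnorm_cong)
            fix vs :: "'a list" assume "vs \<in> VV j"
            then have "length vs = j" unfolding VV_def by auto
            then show "E y vs - E x vs - A2 ((y - x) # vs) = D j (c *\<^sub>R y) vs - D j (c *\<^sub>R x) vs - D (Suc j) (c *\<^sub>R x) ((c *\<^sub>R y - c *\<^sub>R x) # vs)"
              unfolding E_def A2_def using ml_first_scale[OF ml2, of vs c "y - x"]
              by (simp add: scaleR_diff_right)
          qed
          moreover have "norm (c *\<^sub>R y - c *\<^sub>R x) = c * norm (y - x)"
            using c0 by (simp add: scaleR_diff_right[symmetric])
          ultimately show "c * \<psi> (c *\<^sub>R y) = mnorm j (\<lambda>vs. E y vs - E x vs - A2 ((y - x) # vs)) / norm (y - x)"
            unfolding \<psi>_def using c0 by (simp add: field_simps)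
        qed
      qed
      show "\<forall>\<^sub>F y in at x. bounded_form j (\<lambda>vs. E y vs - E x vs - A2 ((y - x) # vs))"
        using ev_ne0[OF x0]
      proof eventually_elim
        case (elim y)
        then have "c *\<^sub>R y \<noteq> 0" using c0 by simp
        then show ?case unfolding E_def A2_def
          by (intro bf_diff bf_scale bf_cons) (use hd_unpack(3)[OF hd] jn cx0 x0 in auto)
      qed
      show "\<And>c' k. A2 ((c' *\<^sub>R k) # ws) = c' * A2 (k # ws)"
        unfolding A2_def using ml_first_scale[OF ml2 lws] by simp
    qed (use False ws in auto)
    have "A1 (h # ws) = A2 (h # ws)" using DERIV_unique[OF d1 d2] .
    then have "D (Suc j) (c *\<^sub>R x) (h # ws) = c powr (p - real j) / c * D (Suc j) x (h # ws)"
      unfolding A1_def A2_def using c0 by (simp add: field_simps)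
    also have "c powr (p - real j) / c = c powr (p - real (Suc j))"
    proof -
      have "c powr (p - real (Suc j)) = c powr ((p - real j) - 1)" by (simp add: algebra_simps)
      also have "\<dots> = c powr (p - real j) / c" using c0 by (simp add: powr_diff)
      finally show ?thesis by simp
    qed
    finally show ?thesis using vs by simp
  qed
qed



lemma EULER:
  fixes f :: "'a::real_normed_vector \<Rightarrow> real"
  assumes hd: "higher_derivs f D n (- {0})" and ph: "p_homogeneous p f"
    and j: "j < n" and x0: "x \<noteq> 0" and vs: "vs \<in> VV j"
  shows "D (Suc j) x (x # vs) = (p - real j) * D j x vs"
proof -
  have lvs: "length vs = j" using vs unfolding VV_def by auto
  have ml: "multilinear_form (Suc j) (D (Suc j) x)" using hd_unpack(2)[OF hd] j x0 by simp
  have d1: "((\<lambda>s. D j (0 + s *\<^sub>R x) vs) has_real_derivative D (Suc j) x (x # vs)) (at 1)"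
  proof (rule DL[where z = x and j = j])
    show "((\<lambda>y. mnorm j (\<lambda>vs. D j y vs - D j x vs - D (Suc j) x ((y - x) # vs)) / norm (y - x)) \<longlongrightarrow> 0) (at x)"
      using hd_unpack(4)[OF hd j] x0 by simp
    show "\<forall>\<^sub>F y in at x. bounded_form j (\<lambda>vs. D j y vs - D j x vs - D (Suc j) x ((y - x) # vs))"
      using ev_ne0[OF x0]
    proof eventually_elim
      case (elim y)
      then show ?case
        by (intro bf_diff bf_cons) (use hd_unpack(3)[OF hd] j x0 in auto)
    qed
    show "\<And>c k. D (Suc j) x ((c *\<^sub>R k) # vs) = c * D (Suc j) x (k # vs)"
      using ml_first_scale[OF ml lvs] by simp
  qed (use x0 vs in auto)
  have d2: "((\<lambda>s. s powr (p - real j) * D j x vs) has_real_derivative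
      ((p - real j) * 1 powr (p - real j - 1)) * D j x vs) (at 1)"
    by (intro DERIV_cmult_right has_real_derivative_powr) simp
  have ev0: "\<forall>\<^sub>F s in nhds (1::real). s \<in> {0<..}"
    by (rule eventually_nhds_in_open) auto
  have ev: "\<forall>\<^sub>F s in nhds (1::real). D j (0 + s *\<^sub>R x) vs = s powr (p - real j) * D j x vs"
    using ev0
  proof eventually_elim
    case (elim s)
    then show ?case
      using HOM[OF hd ph, of j x s vs] j x0 vs by simp
  qed
  have "((\<lambda>s. D j (0 + s *\<^sub>R x) vs) has_real_derivative (p - real j) * D j x vs) (at 1)"
    using d2 DERIV_cong_ev[OF refl ev, of "(p - real j) * D j x vs" "(p - real j) * D j x vs"] by simp
  then show ?thesis using DERIV_unique[OF d1] by blast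
qed

lemma SB:
  fixes f :: "'a::real_normed_vector \<Rightarrow> real"
  assumes hd: "higher_derivs f D n (- {0})" and ph: "p_homogeneous p f"
    and np: "real n < p" and rn: "real n \<le> r"
    and hol: "\<exists>K. \<forall>x y. norm x = 1 \<longrightarrow> norm y = 1 \<longrightarrow>
           mnorm n (\<lambda>vs. D n x vs - D n y vs) \<le> K * norm (x - y) powr (r - real n)"
  shows "\<exists>B. \<forall>j\<le>n. 0 \<le> B j \<and> (\<forall>x. norm x = 1 \<longrightarrow> mnorm j (D j x) \<le> B j)"
proof -
  obtain K where K: "\<And>x y. norm x = 1 \<Longrightarrow> norm y = 1 \<Longrightarrow>
           mnorm n (\<lambda>vs. D n x vs - D n y vs) \<le> K * norm (x - y) powr (r - real n)"
    using hol by blast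
  have top: "\<exists>b\<ge>0. \<forall>x. norm x = 1 \<longrightarrow> mnorm n (D n x) \<le> b"
  proof (cases "\<exists>e::'a. norm e = 1")
    case False then show ?thesis by auto
  next
    case True
    then obtain e :: 'a where e: "norm e = 1" by blast
    have e0: "e \<noteq> 0" using e by auto
    have be: "bounded_form n (D n e)" using hd_unpack(3)[OF hd] e0 by simp
    show ?thesis
    proof (intro exI[of _ "mnorm n (D n e) + \<bar>K\<bar> * 2 powr (r - real n)"] conjI allI impI)
      show "0 \<le> mnorm n (D n e) + \<bar>K\<bar> * 2 powr (r - real n)"
        using mnorm_nonneg[OF be] by simp
      fix x :: 'a assume x: "norm x = 1"
      then have x0: "x \<noteq> 0" by auto
      have bx: "bounded_form n (D n x)" using hd_unpack(3)[OF hd] x0 by simp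
      have bd: "bounded_form n (\<lambda>vs. D n x vs - D n e vs)" by (rule bf_diff[OF bx be])
      have "norm (x - e) \<le> 2" using norm_triangle_ineq4[of x e] x e by simp
      then have "norm (x - e) powr (r - real n) \<le> 2 powr (r - real n)"
        using rn by (intro powr_mono2) auto
      then have "K * norm (x - e) powr (r - real n) \<le> \<bar>K\<bar> * 2 powr (r - real n)"
        by (smt (verit, best) mult_left_mono powr_ge_zero mult_le_cancel_right abs_ge_self abs_ge_zero)
      then have hk: "mnorm n (\<lambda>vs. D n x vs - D n e vs) \<le> \<bar>K\<bar> * 2 powr (r - real n)"
        using K[OF x e] by linarith
      show "mnorm n (D n x) \<le> mnorm n (D n e) + \<bar>K\<bar> * 2 powr (r - real n)"
      proof (rule mnorm_least)
        fix vs :: "'a list" assume vs: "vs \<in> VV n"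
        have "\<bar>D n x vs\<bar> \<le> \<bar>D n x vs - D n e vs\<bar> + \<bar>D n e vs\<bar>" by linarith
        also have "\<dots> \<le> mnorm n (\<lambda>vs. D n x vs - D n e vs) + mnorm n (D n e)"
          using mnorm_upper[OF bd vs] mnorm_upper[OF be vs] by simp
        finally show "\<bar>D n x vs\<bar> \<le> mnorm n (D n e) + \<bar>K\<bar> * 2 powr (r - real n)" using hk by linarith
      qed
    qed
  qed
  have step: "\<exists>b\<ge>0. \<forall>x. norm x = 1 \<longrightarrow> mnorm j (D j x) \<le> b"
    if j: "j < n" and b: "b \<ge> 0" "\<forall>x. norm x = 1 \<longrightarrow> mnorm (Suc j) (D (Suc j) x) \<le> b" for j b
  proof (intro exI[of _ "b / (p - real j)"] conjI allI impI)
    have pj: "p - real j > 0" using j np by simp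
    show "0 \<le> b / (p - real j)" using b pj by simp
    fix x :: 'a assume x: "norm x = 1"
    then have x0: "x \<noteq> 0" by auto
    have bS: "bounded_form (Suc j) (D (Suc j) x)" using hd_unpack(3)[OF hd] x0 j by simp
    show "mnorm j (D j x) \<le> b / (p - real j)"
    proof (rule mnorm_least)
      fix vs :: "'a list" assume vs: "vs \<in> VV j"
      have "\<bar>D (Suc j) x (x # vs)\<bar> \<le> mnorm (Suc j) (D (Suc j) x)"
        using mnorm_upper[OF bS VV_cons[OF vs]] x by simp
      also have "\<dots> \<le> b" using b x by simp
      finally have "(p - real j) * \<bar>D j x vs\<bar> \<le> b"
        using EULER[OF hd ph j x0 vs] pj by (simp add: abs_mult)
      then show "\<bar>D j x vs\<bar> \<le> b / (p - real j)" using pj by (simp add: field_simps)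
    qed
  qed
  have all: "k \<le> n \<Longrightarrow> \<exists>b\<ge>0. \<forall>x. norm x = 1 \<longrightarrow> mnorm (n - k) (D (n - k) x) \<le> b" for k
  proof (induction k)
    case 0 then show ?case using top by simp
  next
    case (Suc k)
    then obtain b where "b \<ge> 0" "\<forall>x. norm x = 1 \<longrightarrow> mnorm (n - k) (D (n - k) x) \<le> b" by auto
    moreover have "Suc (n - Suc k) = n - k" using Suc by simp
    ultimately show ?case using step[of "n - Suc k" b] Suc by simp
  qed
  have "\<forall>j. \<exists>b. j \<le> n \<longrightarrow> 0 \<le> b \<and> (\<forall>x. norm x = 1 \<longrightarrow> mnorm j (D j x) \<le> b)"
  proof
    fix j
    show "\<exists>b. j \<le> n \<longrightarrow> 0 \<le> b \<and> (\<forall>x. norm x = 1 \<longrightarrow> mnorm j (D j x) \<le> b)"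
    proof (cases "j \<le> n")
      case True
      then show ?thesis using all[of "n - j"] by auto
    qed auto
  qed
  then show ?thesis by metis
qed

lemma GB:
  fixes f :: "'a::real_normed_vector \<Rightarrow> real"
  assumes hd: "higher_derivs f D n (- {0})" and ph: "p_homogeneous p f"
    and B: "\<forall>j\<le>n. 0 \<le> B j \<and> (\<forall>x. norm x = 1 \<longrightarrow> mnorm j (D j x) \<le> B j)"
    and j: "j \<le> n" and y0: "y \<noteq> 0"
  shows "mnorm j (D j y) \<le> B j * norm y powr (p - real j)"
proof -
  define u where "u = y /\<^sub>R norm y"
  have u: "norm u = 1" "u \<noteq> 0" using y0 unfolding u_def by auto
  have yu: "y = norm y *\<^sub>R u" using y0 unfolding u_def by simp
  have bu: "bounded_form j (D j u)" using hd_unpack(3)[OF hd j] u by simp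
  have "mnorm j (D j y) = mnorm j (\<lambda>vs. norm y powr (p - real j) * D j u vs)"
    by (rule mnorm_cong) (subst yu, rule HOM[OF hd ph j u(2)], use y0 in auto)
  also have "\<dots> = norm y powr (p - real j) * mnorm j (D j u)"
    using mnorm_scale[OF bu] by simp
  also have "\<dots> \<le> norm y powr (p - real j) * B j"
    using B j u by (intro mult_left_mono) auto
  finally show ?thesis by (simp add: mult.commute)
qed



lemma POWB:
  fixes t q :: real
  assumes "1/2 \<le> t" "t \<le> 1" "0 < q"
  shows "1 - t powr q \<le> 2 * q * (1 - t)"
proof (cases "t = 1")
  case True then show ?thesis by simp
next
  case False
  then have t1: "t < 1" using assms by simp
  have "\<And>x. t \<le> x \<and> x \<le> 1 \<Longrightarrow> ((\<lambda>z. z powr q) has_real_derivative q * x powr (q - 1)) (at x)"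
    using assms by (intro has_real_derivative_powr) auto
  then obtain \<xi> where xi: "t < \<xi>" "\<xi> < 1" and eq: "1 powr q - t powr q = (1 - t) * (q * \<xi> powr (q - 1))"
    using MVT2[OF t1, of "\<lambda>z. z powr q" "\<lambda>x. q * x powr (q - 1)"] by blast
  have xi0: "\<xi> > 0" using xi assms by simp
  have "\<xi> powr q \<le> 1 powr q" using xi xi0 assms by (intro powr_mono2) auto
  then have "\<xi> powr q \<le> 1" by simp
  have "\<xi> powr (q - 1) = \<xi> powr q / \<xi>" using xi0 by (simp add: powr_diff)
  also have "\<dots> \<le> 1 / \<xi>" using \<open>\<xi> powr q \<le> 1\<close> xi0 by (simp add: divide_right_mono)
  also have "\<dots> \<le> 2" using xi assms xi0 by (simp add: field_simps)
  finally have "\<xi> powr (q - 1) \<le> 2" .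
  then have "(1 - t) * (q * \<xi> powr (q - 1)) \<le> (1 - t) * (q * 2)"
    using t1 assms by (intro mult_left_mono) auto
  then show ?thesis using eq by (simp add: algebra_simps)
qed

lemma le_powr_small:
  fixes x a :: real
  assumes "0 \<le> x" "x \<le> 1" "0 \<le> a" "a \<le> 1"
  shows "x \<le> x powr a"
proof -
  have "x powr 1 \<le> x powr a" using assms by (intro powr_mono') auto
  then show ?thesis using assms by (cases "x = 0") auto
qed

lemma HOLD_UNIT:
  fixes G :: "'a::real_normed_vector \<Rightarrow> 'a list \<Rightarrow> real"
  assumes bf: "\<And>x. bounded_form n (G x)"
    and hom: "\<And>x c vs. c > 0 \<Longrightarrow> vs \<in> VV n \<Longrightarrow> G (c *\<^sub>R x) vs = c powr q * G x vs"
    and bnd: "\<And>z. mnorm n (G z) \<le> Bn * norm z powr q" and Bn: "0 \<le> Bn"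
    and q: "0 < q" and a: "0 < a" "a \<le> 1"
    and K: "\<And>x y. norm x = 1 \<Longrightarrow> norm y = 1 \<Longrightarrow>
           mnorm n (\<lambda>vs. G x vs - G y vs) \<le> K * norm (x - y) powr a"
    and u: "norm u = 1" and w: "norm w \<le> 1"
  shows "mnorm n (\<lambda>vs. G u vs - G w vs) \<le> (4 * Bn + 2 * \<bar>K\<bar> + 2 * q * Bn + 1) * norm (u - w) powr a"
proof -
  define C0 where "C0 = 4 * Bn + 2 * \<bar>K\<bar> + 2 * q * Bn + 1"
  have bd1: "\<And>z. norm z \<le> 1 \<Longrightarrow> mnorm n (G z) \<le> Bn"
  proof -
    fix z :: 'a assume "norm z \<le> 1"
    then have "norm z powr q \<le> 1 powr q" using q by (intro powr_mono2) auto
    then have "Bn * norm z powr q \<le> Bn" using Bn by (simp add: mult_left_le)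
    then show "mnorm n (G z) \<le> Bn" using bnd[of z] by linarith
  qed
  have bdiff: "bounded_form n (\<lambda>vs. G x vs - G y vs)" for x y by (rule bf_diff[OF bf bf])
  have pa0: "0 \<le> norm (u - w) powr a" by simp
  show ?thesis
  proof (cases "norm (u - w) \<ge> 1/2")
    case True
    have "(1/2::real) \<le> (1/2) powr a" using a by (intro le_powr_small) auto
    also have "(1/2::real) powr a \<le> norm (u - w) powr a" using True a by (intro powr_mono2) auto
    finally have h: "1/2 \<le> norm (u - w) powr a" .
    have "mnorm n (\<lambda>vs. G u vs - G w vs) \<le> 2 * Bn"
    proof (rule mnorm_least)
      fix vs :: "'a list" assume vs: "vs \<in> VV n"
      have "\<bar>G u vs - G w vs\<bar> \<le> \<bar>G u vs\<bar> + \<bar>G w vs\<bar>" by linarith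
      also have "\<dots> \<le> Bn + Bn" using mnorm_upper[OF bf vs, of u] mnorm_upper[OF bf vs, of w] bd1[of u] bd1[of w] u w
        by linarith
      finally show "\<bar>G u vs - G w vs\<bar> \<le> 2 * Bn" by simp
    qed
    also have "2 * Bn \<le> 4 * Bn * norm (u - w) powr a"
    proof -
      have "Bn * (1/2) \<le> Bn * norm (u - w) powr a" using h Bn by (intro mult_left_mono) auto
      then show ?thesis by simp
    qed
    also have "\<dots> \<le> C0 * norm (u - w) powr a" unfolding C0_def using pa0 Bn q
      by (intro mult_right_mono) auto
    finally show ?thesis unfolding C0_def .
  next
    case False
    define d where "d = norm (u - w)"
    have d: "d < 1/2" "0 \<le> d" using False unfolding d_def by auto
    define t where "t = norm w"
    have t1: "1 - t \<le> d" unfolding t_def d_def using norm_triangle_ineq2[of u w] u by simp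
    have t: "1/2 \<le> t" "t \<le> 1" using t1 d w unfolding t_def by auto
    define w' where "w' = w /\<^sub>R t"
    have w'n: "norm w' = 1" using t unfolding w'_def t_def by (auto simp: field_simps)
    have ww': "w = t *\<^sub>R w'" using t unfolding w'_def by simp
    have "norm (w - w') = 1 - t"
    proof -
      have "w - w' = (t - 1) *\<^sub>R w'" using ww' by (simp add: algebra_simps)
      then show ?thesis using w'n t by simp
    qed
    then have "norm (u - w') \<le> d + (1 - t)" unfolding d_def
      using norm_triangle_ineq[of "u - w" "w - w'"] by simp
    also have "\<dots> \<le> 2 * d" using t1 by simp
    finally have uw': "norm (u - w') \<le> 2 * d" .
    have "norm (u - w') powr a \<le> (2 * d) powr a" using uw' a by (intro powr_mono2) auto
    also have "\<dots> = 2 powr a * d powr a" using d by (simp add: powr_mult)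
    also have "\<dots> \<le> 2 * d powr a"
    proof -
      have "(2::real) powr a \<le> 2 powr 1" using a by (intro powr_mono) auto
      then show ?thesis by (intro mult_right_mono) auto
    qed
    finally have A1: "norm (u - w') powr a \<le> 2 * d powr a" .
    have A2: "mnorm n (\<lambda>vs. G u vs - G w' vs) \<le> 2 * \<bar>K\<bar> * d powr a"
    proof -
      have "mnorm n (\<lambda>vs. G u vs - G w' vs) \<le> K * norm (u - w') powr a" using K[OF u w'n] .
      also have "\<dots> \<le> \<bar>K\<bar> * norm (u - w') powr a" by (intro mult_right_mono) auto
      also have "\<dots> \<le> \<bar>K\<bar> * (2 * d powr a)" using A1 by (intro mult_left_mono) auto
      finally show ?thesis by simp
    qed
    have tq: "t powr q \<le> 1" using t q powr_mono2[of q t 1] by simp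
    have A3: "(1 - t powr q) * Bn \<le> 2 * q * Bn * d powr a"
    proof -
      have "(1 - t powr q) \<le> 2 * q * (1 - t)" using POWB[OF t q] .
      also have "\<dots> \<le> 2 * q * d" using t1 q by simp
      also have "\<dots> \<le> 2 * q * d powr a" using le_powr_small[of d a] d a q by simp
      finally show ?thesis using Bn by (smt (verit) mult_right_mono mult.commute mult.assoc)
    qed
    have "mnorm n (\<lambda>vs. G u vs - G w vs) \<le> 2 * \<bar>K\<bar> * d powr a + 2 * q * Bn * d powr a"
    proof (rule mnorm_least)
      fix vs :: "'a list" assume vs: "vs \<in> VV n"
      have Gw: "G w vs = t powr q * G w' vs" using hom[of t vs w'] t vs ww' by simp
      have "\<bar>G u vs - G w vs\<bar> \<le> \<bar>G u vs - G w' vs\<bar> + (1 - t powr q) * \<bar>G w' vs\<bar>"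
      proof -
        have e: "G u vs - G w vs = (G u vs - G w' vs) + (1 - t powr q) * G w' vs"
          unfolding Gw by (simp add: algebra_simps)
        have "\<bar>(1 - t powr q) * G w' vs\<bar> = (1 - t powr q) * \<bar>G w' vs\<bar>"
          using tq by (simp add: abs_mult)
        then show ?thesis unfolding e by linarith
      qed
      also have "\<dots> \<le> mnorm n (\<lambda>vs. G u vs - G w' vs) + (1 - t powr q) * Bn"
      proof -
        have "\<bar>G w' vs\<bar> \<le> Bn" using mnorm_upper[OF bf vs, of w'] bd1[of w'] w'n by simp
        then have "(1 - t powr q) * \<bar>G w' vs\<bar> \<le> (1 - t powr q) * Bn"
          using tq by (intro mult_left_mono) auto
        then show ?thesis using mnorm_upper[OF bdiff vs, of u w'] by linarith
      qed
      also have "\<dots> \<le> 2 * \<bar>K\<bar> * d powr a + 2 * q * Bn * d powr a" using A2 A3 by linarith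
      finally show "\<bar>G u vs - G w vs\<bar> \<le> 2 * \<bar>K\<bar> * d powr a + 2 * q * Bn * d powr a" .
    qed
    also have "\<dots> \<le> C0 * d powr a" unfolding C0_def using Bn pa0 d_def
      by (simp add: algebra_simps)
    finally show ?thesis unfolding C0_def d_def .
  qed
qed



lemma HOLD:
  fixes G :: "'a::real_normed_vector \<Rightarrow> 'a list \<Rightarrow> real"
  assumes bf: "\<And>x. bounded_form n (G x)"
    and hom: "\<And>x c vs. c > 0 \<Longrightarrow> vs \<in> VV n \<Longrightarrow> G (c *\<^sub>R x) vs = c powr q * G x vs"
    and bnd: "\<And>z. mnorm n (G z) \<le> Bn * norm z powr q" and Bn: "0 \<le> Bn"
    and q: "0 < q" and a: "0 < a" "a \<le> 1"
    and K: "\<And>x y. norm x = 1 \<Longrightarrow> norm y = 1 \<Longrightarrow>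
           mnorm n (\<lambda>vs. G x vs - G y vs) \<le> K * norm (x - y) powr a"
    and G0: "\<And>vs. G 0 vs = 0"
  shows "mnorm n (\<lambda>vs. G x vs - G y vs)
     \<le> (4 * Bn + 2 * \<bar>K\<bar> + 2 * q * Bn + 1) * (max (norm x) (norm y)) powr (q - a) * norm (x - y) powr a"
proof -
  define C0 where "C0 = 4 * Bn + 2 * \<bar>K\<bar> + 2 * q * Bn + 1"
  have C0: "C0 > 0"
  proof -
    have "0 \<le> q * Bn" using Bn q by simp
    then show ?thesis unfolding C0_def using Bn by linarith
  qed
  have main: "mnorm n (\<lambda>vs. G x vs - G y vs) \<le> C0 * (max (norm x) (norm y)) powr (q - a) * norm (x - y) powr a"
    if le: "norm y \<le> norm x" for x y
  proof (cases "x = 0")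
    case True
    then have "y = 0" using le by simp
    then have "mnorm n (\<lambda>vs. G x vs - G y vs) = 0"
      using True mnorm_zero[of n] by simp
    then show ?thesis using C0 by simp
  next
    case False
    define s where "s = norm x"
    have s0: "s > 0" using False unfolding s_def by simp
    define u where "u = x /\<^sub>R s"
    define w where "w = y /\<^sub>R s"
    have un: "norm u = 1" using s0 unfolding u_def s_def by simp
    have wn: "norm w \<le> 1" using s0 le unfolding w_def s_def by (simp add: field_simps)
    have xu: "x = s *\<^sub>R u" and yw: "y = s *\<^sub>R w" using s0 unfolding u_def w_def by simp_all
    have "mnorm n (\<lambda>vs. G x vs - G y vs) = mnorm n (\<lambda>vs. s powr q * (G u vs - G w vs))"
    proof (rule mnorm_cong)
      fix vs :: "'a list" assume "vs \<in> VV n"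
      then show "G x vs - G y vs = s powr q * (G u vs - G w vs)"
        using hom[of s vs u] hom[of s vs w] s0 xu yw by (simp add: algebra_simps)
    qed
    also have "\<dots> = s powr q * mnorm n (\<lambda>vs. G u vs - G w vs)"
      using mnorm_scale[OF bf_diff[OF bf bf]] by simp
    also have "\<dots> \<le> s powr q * (C0 * norm (u - w) powr a)"
    proof -
      have "mnorm n (\<lambda>vs. G u vs - G w vs) \<le> C0 * norm (u - w) powr a"
        using HOLD_UNIT[OF bf hom bnd Bn q a K un wn] unfolding C0_def .
      then show ?thesis by (rule mult_left_mono) simp
    qed
    also have "\<dots> = C0 * s powr (q - a) * norm (x - y) powr a"
    proof -
      have "x - y = s *\<^sub>R (u - w)" using xu yw by (simp add: scaleR_diff_right)
      then have "norm (x - y) = s * norm (u - w)" using s0 by simp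
      then have "norm (x - y) powr a = s powr a * norm (u - w) powr a"
        using s0 by (simp add: powr_mult)
      moreover have "s powr q = s powr (q - a) * s powr a"
        using s0 by (simp add: powr_add[symmetric])
      ultimately show ?thesis by (simp add: algebra_simps)
    qed
    finally have fin: "mnorm n (\<lambda>vs. G x vs - G y vs) \<le> C0 * s powr (q - a) * norm (x - y) powr a" .
    have "max (norm x) (norm y) = s" using le unfolding s_def by simp
    then show ?thesis using fin by simp
  qed
  show ?thesis
  proof (cases "norm y \<le> norm x")
    case True
    then show ?thesis using main C0_def by simp
  next
    case False
    then have "mnorm n (\<lambda>vs. G y vs - G x vs) \<le> C0 * (max (norm y) (norm x)) powr (q - a) * norm (y - x) powr a"
      using main[of x y] by simp
    then show ?thesis unfolding C0_def using mnorm_swap[of n "G x" "G y"]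
      by (simp add: max.commute norm_minus_commute)
  qed
qed

lemma LIP:
  fixes f :: "'a::real_normed_vector \<Rightarrow> real"
  assumes hd: "higher_derivs f D n UNIV" and j: "j < n"
    and bnd: "\<And>z. mnorm (Suc j) (D (Suc j) z) \<le> b * norm z powr e" and b: "0 \<le> b" and e: "0 \<le> e"
  shows "mnorm j (\<lambda>vs. D j x vs - D j y vs) \<le> b * (max (norm x) (norm y)) powr e * norm (x - y)"
proof (cases "x = y")
  case True
  then show ?thesis using mnorm_zero[where 'a='a, of j] b by simp
next
  case False
  define h where "h = x - y"
  have h0: "h \<noteq> 0" using False unfolding h_def by simp
  define M where "M = max (norm x) (norm y)"
  show ?thesis unfolding M_def[symmetric]
  proof (rule mnorm_least)
    fix vs :: "'a list" assume vs: "vs \<in> VV j"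
    have lvs: "length vs = j" using vs unfolding VV_def by auto
    have der: "((\<lambda>s. D j (y + s *\<^sub>R h) vs) has_real_derivative D (Suc j) (y + s0 *\<^sub>R h) (h # vs)) (at s0)"
      for s0
    proof (rule DL[where z = "y + s0 *\<^sub>R h" and j = j])
      show "((\<lambda>ya. mnorm j (\<lambda>vs. D j ya vs - D j (y + s0 *\<^sub>R h) vs - D (Suc j) (y + s0 *\<^sub>R h) ((ya - (y + s0 *\<^sub>R h)) # vs)) /
           norm (ya - (y + s0 *\<^sub>R h))) \<longlongrightarrow> 0) (at (y + s0 *\<^sub>R h))"
        using hd_unpack(4)[OF hd j] by simp
      show "\<forall>\<^sub>F ya in at (y + s0 *\<^sub>R h).
          bounded_form j (\<lambda>vs. D j ya vs - D j (y + s0 *\<^sub>R h) vs - D (Suc j) (y + s0 *\<^sub>R h) ((ya - (y + s0 *\<^sub>R h)) # vs))"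
        by (intro always_eventually allI bf_diff bf_cons) (use hd_unpack(3)[OF hd] j in auto)
      show "\<And>c k. D (Suc j) (y + s0 *\<^sub>R h) ((c *\<^sub>R k) # vs) = c * D (Suc j) (y + s0 *\<^sub>R h) (k # vs)"
        using ml_first_scale[OF _ lvs] hd_unpack(2)[OF hd] j by simp
    qed (use h0 vs in auto)
    have "\<exists>\<xi>>0. \<xi> < 1 \<and> (\<lambda>s. D j (y + s *\<^sub>R h) vs) 1 - (\<lambda>s. D j (y + s *\<^sub>R h) vs) 0
        = (1 - 0) * (\<lambda>s. D (Suc j) (y + s *\<^sub>R h) (h # vs)) \<xi>"
      by (rule MVT2[of 0 1]) (simp, rule der)
    then obtain \<xi> where xi: "0 < \<xi>" "\<xi> < 1"
      and eq: "D j (y + 1 *\<^sub>R h) vs - D j (y + 0 *\<^sub>R h) vs = (1 - 0) * D (Suc j) (y + \<xi> *\<^sub>R h) (h # vs)"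
      by blast
    define z where "z = y + \<xi> *\<^sub>R h"
    have "D j x vs - D j y vs = D (Suc j) z (h # vs)" using eq unfolding z_def h_def by simp
    also have "\<dots> = norm h * D (Suc j) z ((h /\<^sub>R norm h) # vs)"
      using ml_first_scale[OF _ lvs, of "D (Suc j) z" "norm h" "h /\<^sub>R norm h"] hd_unpack(2)[OF hd] j h0
      by simp
    finally have e1: "\<bar>D j x vs - D j y vs\<bar> = norm h * \<bar>D (Suc j) z ((h /\<^sub>R norm h) # vs)\<bar>"
      by (simp add: abs_mult)
    have "\<bar>D (Suc j) z ((h /\<^sub>R norm h) # vs)\<bar> \<le> mnorm (Suc j) (D (Suc j) z)"
      using mnorm_upper[OF _ VV_cons[OF vs]] hd_unpack(3)[OF hd] j h0 by simp
    also have "\<dots> \<le> b * norm z powr e" by (rule bnd)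
    also have "\<dots> \<le> b * M powr e"
    proof -
      have "z = (1 - \<xi>) *\<^sub>R y + \<xi> *\<^sub>R x" unfolding z_def h_def by (simp add: algebra_simps)
      then have "norm z \<le> (1 - \<xi>) * norm y + \<xi> * norm x"
        using norm_triangle_ineq[of "(1 - \<xi>) *\<^sub>R y" "\<xi> *\<^sub>R x"] xi by simp
      also have "\<dots> \<le> (1 - \<xi>) * M + \<xi> * M" unfolding M_def using xi
        by (intro add_mono mult_left_mono) auto
      finally have "norm z \<le> M" by (simp add: algebra_simps)
      then show ?thesis using b e by (intro mult_left_mono powr_mono2) auto
    qed
    finally have "norm h * \<bar>D (Suc j) z ((h /\<^sub>R norm h) # vs)\<bar> \<le> norm h * (b * M powr e)"
      by (intro mult_left_mono) auto
    then have "\<bar>D j x vs - D j y vs\<bar> \<le> norm h * (b * M powr e)"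
      using e1 by linarith
    then show "\<bar>D j x vs - D j y vs\<bar> \<le> b * M powr e * norm (x - y)"
      unfolding h_def by (simp only: mult.commute)
  qed
qed



theorem lemma2p2:
  fixes f :: "'a::banach \<Rightarrow> real" and r p :: real and n :: nat
    and D :: "nat \<Rightarrow> 'a \<Rightarrow> 'a list \<Rightarrow> real"
  assumes "1 < r" and "r \<le> p"
    and "n = nat (\<lceil>r\<rceil> - 1)"
    and "p_homogeneous p f"
    and "higher_derivs f D n (- {0})"
    and "\<exists>K. \<forall>x y. norm x = 1 \<longrightarrow> norm y = 1 \<longrightarrow>
           mnorm n (\<lambda>vs. D n x vs - D n y vs) \<le> K * norm (x - y) powr (r - real n)"
  shows "\<exists>D'. higher_derivs f D' n UNIV \<and>
           (\<forall>j\<in>{1..n}. \<forall>vs. length vs = j \<longrightarrow> D' j 0 vs = 0) \<and>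
           (\<exists>C :: nat \<Rightarrow> real. (\<forall>j\<in>{1..n}. C j > 0) \<and>
              (\<forall>x y. mnorm n (\<lambda>vs. D' n x vs - D' n y vs)
                 \<le> C n * (max (norm x) (norm y)) powr (p - r) * norm (x - y) powr (r - real n)) \<and>
              (\<forall>j\<in>{1..<n}. \<forall>x y. mnorm j (\<lambda>vs. D' j x vs - D' j y vs)
                 \<le> C j * (max (norm x) (norm y)) powr (p - real (j + 1)) * norm (x - y)))"
proof -
  note hd = assms(5) and ph = assms(4) and hol = assms(6)
  have cr: "of_int \<lceil>r\<rceil> - 1 < r" "r \<le> of_int \<lceil>r\<rceil>" by linarith+
  have c2: "\<lceil>r\<rceil> \<ge> 2" using assms(1) by linarith
  have nr': "real n = of_int \<lceil>r\<rceil> - 1" using assms(3) c2 by simp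
  have nr: "real n < r" "r \<le> real n + 1" using cr nr' by linarith+
  have np: "real n < p" using nr assms(2) by linarith
  obtain B where B: "\<forall>j\<le>n. 0 \<le> B j \<and> (\<forall>x. norm x = 1 \<longrightarrow> mnorm j (D j x) \<le> B j)"
    using SB[OF hd ph np _ hol] nr by auto
  obtain K where K: "\<And>x y. norm x = 1 \<Longrightarrow> norm y = 1 \<Longrightarrow>
           mnorm n (\<lambda>vs. D n x vs - D n y vs) \<le> K * norm (x - y) powr (r - real n)"
    using hol by blast
  define D' where "D' j x vs = (if x = 0 then 0 else D j x vs)" for j x vs
  have "f ((0::real) *\<^sub>R 0) = \<bar>0::real\<bar> powr p * f 0" using ph unfolding p_homogeneous_def by blast
  then have f0: "f 0 = 0" by simp
  have D'0: "\<And>j vs. D' j 0 vs = 0" unfolding D'_def by simp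
  have D'x: "\<And>j x. x \<noteq> 0 \<Longrightarrow> D' j x = D j x" unfolding D'_def by auto
  have zb: "bounded_form j (\<lambda>vs::'a list. 0)" for j
    by (auto simp: bounded_form_def intro: exI[of _ 0])
  have zm: "mnorm j (\<lambda>vs::'a list. 0) = 0" for j by (rule mnorm_zero)
  have GB': "mnorm j (D' j y) \<le> B j * norm y powr (p - real j)" if j: "j \<le> n" for j y
  proof (cases "y = 0")
    case True
    have "D' j y = (\<lambda>vs. 0)" using True D'0 by auto
    then show ?thesis using zm B j by simp
  next
    case False
    then show ?thesis using GB[OF hd ph B j False] D'x by simp
  qed
  have HD': "higher_derivs f D' n UNIV"
    unfolding higher_derivs_def
  proof (intro conjI ballI allI impI)
    fix x :: 'a
    show "D' 0 x [] = f x"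
      using f0 hd_unpack(1)[OF hd, of x] unfolding D'_def by auto
  next
    fix j x assume j: "j \<le> n"
    show "multilinear_form j (D' j x)"
    proof (cases "x = 0")
      case True
      then have "D' j x = (\<lambda>vs. 0)" using D'0 by auto
      then show ?thesis unfolding multilinear_form_def by (simp add: linear_zero)
    next
      case False then show ?thesis using hd_unpack(2)[OF hd j] D'x by simp
    qed
    show "bounded_form j (D' j x)"
    proof (cases "x = 0")
      case True
      then have "D' j x = (\<lambda>vs. 0)" using D'0 by auto
      then show ?thesis using zb by simp
    next
      case False then show ?thesis using hd_unpack(3)[OF hd j] D'x by simp
    qed
  next
    fix j x assume j: "j < n"
    show "((\<lambda>y. mnorm j (\<lambda>vs. D' j y vs - D' j x vs - D' (Suc j) x ((y - x) # vs)) / norm (y - x)) \<longlongrightarrow> 0) (at x)"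
    proof (cases "x = 0")
      case False
      show ?thesis
      proof (rule Lim_transform_eventually[OF hd_unpack(4)[OF hd j, of x]])
        show "x \<in> - {0}" using False by simp
        show "\<forall>\<^sub>F y in at x. mnorm j (\<lambda>vs. D j y vs - D j x vs - D (Suc j) x ((y - x) # vs)) / norm (y - x) =
            mnorm j (\<lambda>vs. D' j y vs - D' j x vs - D' (Suc j) x ((y - x) # vs)) / norm (y - x)"
          using ev_ne0[OF False] by eventually_elim (simp add: D'x False)
      qed
    next
      case True
      define e where "e = p - real j - 1"
      have e0: "e > 0" unfolding e_def using j np by simp
      have lim: "((\<lambda>y::'a. norm y powr e) \<longlongrightarrow> 0) (at 0)"
        by (rule tendsto_zero_powrI) (auto intro: tendsto_norm_zero tendsto_ident_at e0)
      have "((\<lambda>y. mnorm j (D' j y) / norm y) \<longlongrightarrow> 0) (at 0)"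
      proof (rule tendsto_0_le[OF lim, of _ "B j"])
        show "\<forall>\<^sub>F y in at 0. norm (mnorm j (D' j y) / norm y) \<le> norm (norm y powr e) * B j"
          unfolding eventually_at_filter
        proof (intro always_eventually allI impI)
          fix y :: 'a assume y0: "y \<noteq> 0"
          have bf: "bounded_form j (D' j y)" using hd_unpack(3)[OF hd] j y0 D'x by simp
          have "mnorm j (D' j y) \<le> B j * norm y powr (p - real j)" using GB' j by simp
          also have "norm y powr (p - real j) = norm y powr e * norm y"
          proof -
            have "norm y powr e * norm y = norm y powr e * norm y powr 1" using y0 by simp
            also have "\<dots> = norm y powr (e + 1)" by (simp add: powr_add)
            finally show ?thesis unfolding e_def by simp
          qed
          finally have "mnorm j (D' j y) / norm y \<le> norm (norm y powr e) * B j"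
            using y0 by (simp add: field_simps)
          then show "norm (mnorm j (D' j y) / norm y) \<le> norm (norm y powr e) * B j"
            using mnorm_nonneg[OF bf] by simp
        qed
      qed
      then show ?thesis using True D'0 by simp
    qed
  next
    fix x :: 'a
    show "((\<lambda>y. mnorm n (\<lambda>vs. D' n y vs - D' n x vs)) \<longlongrightarrow> 0) (at x within UNIV)"
    proof (cases "x = 0")
      case False
      have "((\<lambda>y. mnorm n (\<lambda>vs. D n y vs - D n x vs)) \<longlongrightarrow> 0) (at x within - {0})"
        using hd_unpack(5)[OF hd, of x] False by simp
      then have "((\<lambda>y. mnorm n (\<lambda>vs. D n y vs - D n x vs)) \<longlongrightarrow> 0) (at x)"
        using at_within_open[of x "- {0}"] False open_Compl[OF closed_singleton[of "0::'a"]] by simp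
      then show ?thesis
      proof (rule Lim_transform_eventually)
        show "\<forall>\<^sub>F y in at x. mnorm n (\<lambda>vs. D n y vs - D n x vs) = mnorm n (\<lambda>vs. D' n y vs - D' n x vs)"
          using ev_ne0[OF False] by eventually_elim (simp add: D'x False)
      qed
    next
      case True
      have e0: "p - real n > 0" using np by simp
      have lim: "((\<lambda>y::'a. norm y powr (p - real n)) \<longlongrightarrow> 0) (at 0)"
        by (rule tendsto_zero_powrI) (auto intro: tendsto_norm_zero tendsto_ident_at e0)
      have "((\<lambda>y. mnorm n (D' n y)) \<longlongrightarrow> 0) (at 0)"
      proof (rule tendsto_0_le[OF lim, of _ "B n"])
        show "\<forall>\<^sub>F y in at 0. norm (mnorm n (D' n y)) \<le> norm (norm y powr (p - real n)) * B n"
        proof (intro always_eventually allI)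
          fix y :: 'a
          have bf: "bounded_form n (D' n y)"
          proof (cases "y = 0")
            case True
            then have "D' n y = (\<lambda>vs. 0)" using D'0 by auto
            then show ?thesis using zb by simp
          next
            case False then show ?thesis using hd_unpack(3)[OF hd] D'x by simp
          qed
          show "norm (mnorm n (D' n y)) \<le> norm (norm y powr (p - real n)) * B n"
            using GB'[of n y] mnorm_nonneg[OF bf] by (simp add: mult.commute)
        qed
      qed
      then show ?thesis using True D'0 by simp
    qed
  qed
  have bfD': "\<And>j x. j \<le> n \<Longrightarrow> bounded_form j (D' j x)" using hd_unpack(3)[OF HD'] by simp
  define Bn where "Bn = B n"
  define q where "q = p - real n"
  define a where "a = r - real n"
  define Cn where "Cn = 4 * Bn + 2 * \<bar>K\<bar> + 2 * q * Bn + 1"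
  have Bn: "0 \<le> Bn" using B unfolding Bn_def by simp
  have q: "0 < q" unfolding q_def using np by simp
  have a: "0 < a" "a \<le> 1" unfolding a_def using nr by simp_all
  have Cn: "Cn > 0"
  proof -
    have "0 \<le> q * Bn" using Bn q by simp
    then show ?thesis unfolding Cn_def using Bn by linarith
  qed
  have homn: "D' n (c *\<^sub>R x) vs = c powr q * D' n x vs" if "c > 0" "vs \<in> VV n" for x c vs
  proof (cases "x = 0")
    case True then show ?thesis using D'0 by simp
  next
    case False
    then have "c *\<^sub>R x \<noteq> 0" using that by simp
    then show ?thesis using HOM[OF hd ph order.refl False that] D'x False unfolding q_def by simp
  qed
  have Kn: "mnorm n (\<lambda>vs. D' n x vs - D' n y vs) \<le> K * norm (x - y) powr a"
    if "norm x = 1" "norm y = 1" for x y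
  proof -
    have "x \<noteq> 0" "y \<noteq> 0" using that by auto
    then show ?thesis using K[OF that] D'x unfolding a_def by simp
  qed
  have HOLDn: "mnorm n (\<lambda>vs. D' n x vs - D' n y vs)
     \<le> Cn * (max (norm x) (norm y)) powr (p - r) * norm (x - y) powr (r - real n)" for x y
  proof -
    have qa: "q - a = p - r" unfolding q_def a_def by simp
    have GB'': "\<And>z. mnorm n (D' n z) \<le> Bn * norm z powr q"
      using GB'[of n] unfolding Bn_def q_def by simp
    have H: "mnorm n (\<lambda>vs. D' n x vs - D' n y vs) \<le> Cn * (max (norm x) (norm y)) powr (q - a) * norm (x - y) powr a"
      unfolding Cn_def by (rule HOLD[OF bfD'[OF order.refl] homn GB'' Bn q a Kn D'0])
    show ?thesis using H[unfolded qa, unfolded a_def] .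
  qed
  define C where "C j = (if j = n then Cn else B (Suc j) + 1)" for j
  show ?thesis
  proof (intro exI[of _ D'] exI[of _ C] conjI HD' ballI allI impI)
    fix j :: nat and vs :: "'a list" assume "j \<in> {1..n}" "length vs = j"
    show "D' j 0 vs = 0" by (rule D'0)
  next
    fix j :: nat assume j: "j \<in> {1..n}"
    show "C j > 0"
    proof (cases "j = n")
      case True then show ?thesis using Cn unfolding C_def by simp
    next
      case False
      then have "Suc j \<le> n" using j by simp
      then show ?thesis using B unfolding C_def by (simp add: add_nonneg_pos)
    qed
  next
    fix x y :: 'a
    show "mnorm n (\<lambda>vs. D' n x vs - D' n y vs)
       \<le> C n * (max (norm x) (norm y)) powr (p - r) * norm (x - y) powr (r - real n)"
      using HOLDn unfolding C_def by simp
  next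
    fix j :: nat and x y :: 'a assume j: "j \<in> {1..<n}"
    then have jn: "j < n" "Suc j \<le> n" by auto
    have b0: "0 \<le> B (Suc j)" using B jn by simp
    have "mnorm j (\<lambda>vs. D' j x vs - D' j y vs)
        \<le> B (Suc j) * (max (norm x) (norm y)) powr (p - real (Suc j)) * norm (x - y)"
      by (rule LIP[OF HD' jn(1) GB'[OF jn(2)] b0]) (use jn np in simp)
    also have "\<dots> \<le> (B (Suc j) + 1) * (max (norm x) (norm y)) powr (p - real (Suc j)) * norm (x - y)"
      by (intro mult_right_mono) auto
    finally show "mnorm j (\<lambda>vs. D' j x vs - D' j y vs)
       \<le> C j * (max (norm x) (norm y)) powr (p - real (j + 1)) * norm (x - y)"
      using jn unfolding C_def by simp
  qed
qed

end
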